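(* Let $F\neq\mathbb{RP}^2$ be a surface, $D$ a link diagram in $F$ with ordered crossings, and $\bar D$ its mirror image (all crossings switched), with crossings ordered consistently: if $v$ is the $i$-th crossing of $D$ then the corresponding crossing $\bar v$ is the $i$-th crossing of $\bar D$. Let $\varphi:C_{ijs}(D)\to C_{-i,-j,-s}(\bar D)$ send an enhanced state $S$ of $D$ to the enhanced state $\varphi(S)$ of $\bar D$ in which each crossing $\bar v$ receives the marker opposite to the marker of $v$ in $S$ (so that the circles of $S$ and $\varphi(S)$ are naturally identified) and every circle receives the label opposite to its label in $S$. Then $\varphi\circ\tilde d=d^+\circ\varphi$ as maps $C_{ijs}(D)\to C_{-i-2,-j,-s}(\bar D)$, where $\tilde d(S)=\sum_{S'}\sum_v(-1)^{t(S,v)}[S':S]_vS'$ (sum over enhanced states $S'$ of $D$ and crossings $v$ of $D$) and $d^+$ on $C(\bar D)$ is $d^+(T)=\sum_{w}(-1)^{t^+(T,w)}d_w(T)$.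
   Context: A link diagram in $F$ is a finite collection of generically immersed closed curves with finitely many crossings with over/under information. The $(+1)$-/$(-1)$-smoothing of a crossing is the one with coefficient $A$/$A^{-1}$ in $L_p=AL_0+A^{-1}L_\infty$. An enhanced state assigns markers $\pm1$ to crossings and labels $\pm$ to the resulting circles. A circle is trivial if it bounds a disk in $F$, bounding if it bounds a disk or a Möbius band; $\mathcal C(F)$ = unoriented unbounding simple closed curves in $F$ up to homotopy. $I(S)=\#\{+1\}-\#\{-1\}$ markers, $\tau(S)=\#$(trivial circles labeled $+$)$-\#$(trivial labeled $-$), $J=I+2\tau$, $\Psi(S)=\sum\varepsilon_k\gamma_k\in\mathbb Z\mathcal C(F)$ over unbounding circles with labels $\varepsilon_k$. $C_{ijs}(D)$ is free abelian on enhanced states with $(I,J,\Psi)=(i,j,s)$. $[S:S']_v=1$ iff (a) $v$ has marker $+1$ in $S$ and $-1$ in $S'$, (b) other markers agree, (c) circles common to $S,S'$ have equal labels, (d) $J(S)=J(S')$, $\Psi(S)=\Psi(S')$; else $0$. $d_v(S)=\sum_{S'}[S:S']_vS'$; $t(S,v)$ (resp. $t^+(S,v)$) = number of $-1$ (resp. $+1$) markers of $S$ at crossings greater than $v$. *)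

theory Defs
  imports Main
begin

text \<open>Abstract combinatorial model of a link diagram D in a surface F.
  Crossings are 0..<ncr D, ordered by the natural order on nat.
  A marker assignment is a function sigma :: nat => int with sigma v in {1,-1}
  for v < ncr D and sigma v = 0 otherwise.  circles D sigma is the set of circles
  of the smoothing of D determined by sigma (circles are abstract objects of type 'c,
  so that a circle common to two smoothings is literally the same object).
  trivial c: c bounds a disk in F; bounding c: c bounds a disk or a Moebius band;
  hclass c: the element of C(F) (unoriented homotopy class) represented by c
  (only used when c is unbounding).\<close>

record ('c, 'g) diagram =
  ncr :: nat
  circles :: "(nat \<Rightarrow> int) \<Rightarrow> 'c set"
  trivial :: "'c \<Rightarrow> bool"
  bounding :: "'c \<Rightarrow> bool"
  hclass :: "'c \<Rightarrow> 'g"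

type_synonym 'c estate = "(nat \<Rightarrow> int) \<times> ('c \<Rightarrow> int)"

definition markers :: "('c,'g) diagram \<Rightarrow> (nat \<Rightarrow> int) set" where
  "markers D = {\<sigma>. (\<forall>v<ncr D. \<sigma> v = 1 \<or> \<sigma> v = -1) \<and> (\<forall>v. ncr D \<le> v \<longrightarrow> \<sigma> v = 0)}"

definition wf_diagram :: "('c,'g) diagram \<Rightarrow> bool" where
  "wf_diagram D \<longleftrightarrow> (\<forall>\<sigma>\<in>markers D. finite (circles D \<sigma>))
     \<and> (\<forall>c. trivial D c \<longrightarrow> bounding D c)"

text \<open>Mirror image: switching every crossing exchanges the (+1)- and (-1)-smoothings,
  so the smoothing of the mirror with markers sigma is the smoothing of D with markers -sigma.
  The i-th crossing of the mirror corresponds to the i-th crossing of D.\<close>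
definition mirror :: "('c,'g) diagram \<Rightarrow> ('c,'g) diagram" where
  "mirror D = D\<lparr>circles := (\<lambda>\<sigma>. circles D (\<lambda>v. - \<sigma> v))\<rparr>"

definition estates :: "('c,'g) diagram \<Rightarrow> 'c estate set" where
  "estates D = {(\<sigma>, lab). \<sigma> \<in> markers D \<and> (\<forall>c\<in>circles D \<sigma>. lab c = 1 \<or> lab c = -1)
                       \<and> (\<forall>c. c \<notin> circles D \<sigma> \<longrightarrow> lab c = 0)}"

definition Ist :: "('c,'g) diagram \<Rightarrow> 'c estate \<Rightarrow> int" where
  "Ist D S = (\<Sum>v<ncr D. fst S v)"

definition tau :: "('c,'g) diagram \<Rightarrow> 'c estate \<Rightarrow> int" where
  "tau D S = (\<Sum>c\<in>{c\<in>circles D (fst S). trivial D c}. snd S c)"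

definition Jst :: "('c,'g) diagram \<Rightarrow> 'c estate \<Rightarrow> int" where
  "Jst D S = Ist D S + 2 * tau D S"

text \<open>Psi(S) in Z C(F), represented as a coefficient function 'g => int.\<close>
definition Psi :: "('c,'g) diagram \<Rightarrow> 'c estate \<Rightarrow> 'g \<Rightarrow> int" where
  "Psi D S = (\<lambda>g. \<Sum>c\<in>{c\<in>circles D (fst S). \<not> bounding D c \<and> hclass D c = g}. snd S c)"

definition inc :: "('c,'g) diagram \<Rightarrow> 'c estate \<Rightarrow> 'c estate \<Rightarrow> nat \<Rightarrow> int" where
  "inc D S S' v = (if v < ncr D \<and> fst S v = 1 \<and> fst S' v = -1
      \<and> (\<forall>u<ncr D. u \<noteq> v \<longrightarrow> fst S u = fst S' u)
      \<and> (\<forall>c\<in>circles D (fst S) \<inter> circles D (fst S'). snd S c = snd S' c)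
      \<and> Jst D S = Jst D S' \<and> Psi D S = Psi D S' then 1 else 0)"

definition tneg :: "('c,'g) diagram \<Rightarrow> 'c estate \<Rightarrow> nat \<Rightarrow> nat" where
  "tneg D S v = card {u. v < u \<and> u < ncr D \<and> fst S u = -1}"

definition tpos :: "('c,'g) diagram \<Rightarrow> 'c estate \<Rightarrow> nat \<Rightarrow> nat" where
  "tpos D S v = card {u. v < u \<and> u < ncr D \<and> fst S u = 1}"

type_synonym 'c chain = "'c estate \<Rightarrow> int"

definition Cijs :: "('c,'g) diagram \<Rightarrow> int \<Rightarrow> int \<Rightarrow> ('g \<Rightarrow> int) \<Rightarrow> 'c chain set" where
  "Cijs D i j s = {x. \<forall>S. x S \<noteq> 0 \<longrightarrow>
      S \<in> estates D \<and> Ist D S = i \<and> Jst D S = j \<and> Psi D S = s}"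

definition dv :: "('c,'g) diagram \<Rightarrow> nat \<Rightarrow> 'c chain \<Rightarrow> 'c chain" where
  "dv D v x = (\<lambda>S'. if S' \<in> estates D then (\<Sum>S\<in>estates D. x S * inc D S S' v) else 0)"

definition dplus :: "('c,'g) diagram \<Rightarrow> 'c chain \<Rightarrow> 'c chain" where
  "dplus D x = (\<lambda>T'. if T' \<in> estates D then
      (\<Sum>T\<in>estates D. x T * (\<Sum>w<ncr D. (-1) ^ tpos D T w * inc D T T' w)) else 0)"

definition dtilde :: "('c,'g) diagram \<Rightarrow> 'c chain \<Rightarrow> 'c chain" where
  "dtilde D x = (\<lambda>S'. if S' \<in> estates D then
      (\<Sum>S\<in>estates D. x S * (\<Sum>v<ncr D. (-1) ^ tneg D S v * inc D S' S v)) else 0)"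

definition phi_st :: "'c estate \<Rightarrow> 'c estate" where
  "phi_st S = (\<lambda>v. - fst S v, \<lambda>c. - snd S c)"

definition phi :: "('c,'g) diagram \<Rightarrow> 'c chain \<Rightarrow> 'c chain" where
  "phi D x = (\<lambda>T. \<Sum>S\<in>{S\<in>estates D. phi_st S = T}. x S)"

end

theory Submission
  imports Defs
begin

lemma mirror_simps[simp]: "ncr (mirror D) = ncr D" "trivial (mirror D) = trivial D"
  "bounding (mirror D) = bounding D" "hclass (mirror D) = hclass D"
  "circles (mirror D) \<sigma> = circles D (\<lambda>v. - \<sigma> v)"
  by (simp_all add: mirror_def)

lemma phi_st_invol[simp]: "phi_st (phi_st S) = S"
  by (simp add: phi_st_def)

lemma phi_st_simps[simp]: "fst (phi_st S) = (\<lambda>v. - fst S v)" "snd (phi_st S) = (\<lambda>c. - snd S c)"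
  by (simp_all add: phi_st_def)

lemma phi_st_estates: "S \<in> estates D \<Longrightarrow> phi_st S \<in> estates (mirror D)"
  by (cases S) (auto simp: estates_def markers_def phi_st_def)

lemma phi_st_estates2: "T \<in> estates (mirror D) \<Longrightarrow> phi_st T \<in> estates D"
  by (cases T) (auto simp: estates_def markers_def phi_st_def)

lemma phi_st_estates_iff: "phi_st T \<in> estates D \<longleftrightarrow> T \<in> estates (mirror D)"
  using phi_st_estates phi_st_estates2 by fastforce

lemma phi_eval: "phi D x T = (if T \<in> estates (mirror D) then x (phi_st T) else 0)"
proof -
  have "{S\<in>estates D. phi_st S = T} = (if T \<in> estates (mirror D) then {phi_st T} else {})"
  proof (cases "T \<in> estates (mirror D)")
    case True
    then have "phi_st T \<in> estates D" by (rule phi_st_estates2)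
    then show ?thesis using True by (auto; metis phi_st_invol)
  next
    case False
    then show ?thesis using phi_st_estates by fastforce
  qed
  then show ?thesis by (simp add: phi_def)
qed

lemma mirror_mirror: "mirror (mirror D) = D"
  by (simp add: mirror_def)

lemma Ist_phi: "Ist (mirror D) (phi_st S) = - Ist D S"
  by (simp add: Ist_def sum_negf)

lemma tau_phi: "tau (mirror D) (phi_st S) = - tau D S"
  by (simp add: tau_def sum_negf)

lemma Jst_phi: "Jst (mirror D) (phi_st S) = - Jst D S"
  by (simp add: Jst_def Ist_phi tau_phi)

lemma Psi_phi: "Psi (mirror D) (phi_st S) = - Psi D S"
  by (rule ext) (simp add: Psi_def sum_negf)

lemma tpos_phi: "tpos (mirror D) (phi_st S) w = tneg D S w"
  unfolding tpos_def tneg_def by (rule arg_cong[where f=card]) auto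

lemma inc_phi: "inc (mirror D) (phi_st S) (phi_st S') w = inc D S' S w"
proof -
  have "(- Psi D S = - Psi D S') = (Psi D S = Psi D S')" by (auto simp: fun_eq_iff)
  then show ?thesis unfolding inc_def Jst_phi Psi_phi by auto
qed

theorem proposition9p3:
  fixes D :: "('c, 'g) diagram"
    and i j :: int and s :: "'g \<Rightarrow> int" and x :: "'c chain"
  assumes "wf_diagram D"
    and "x \<in> Cijs D i j s"
  shows "phi D x \<in> Cijs (mirror D) (- i) (- j) (- s)
      \<and> dtilde D x \<in> Cijs D (i + 2) j s
      \<and> phi D (dtilde D x) \<in> Cijs (mirror D) (- i - 2) (- j) (- s)
      \<and> phi D (dtilde D x) = dplus (mirror D) (phi D x)"
proof -
  have phiC: "phi D y \<in> Cijs (mirror D) (- a) (- b) (- c)" if "y \<in> Cijs D a b c" for y a b c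
    unfolding Cijs_def
  proof (intro CollectI allI impI)
    fix T assume nz: "phi D y T \<noteq> 0"
    then have Te: "T \<in> estates (mirror D)" and yT: "y (phi_st T) \<noteq> 0"
      by (auto simp: phi_eval split: if_splits)
    then have "Ist D (phi_st T) = a" "Jst D (phi_st T) = b" "Psi D (phi_st T) = c"
      using that yT spec[of "\<lambda>S. y S \<noteq> 0 \<longrightarrow> S \<in> estates D \<and> Ist D S = a \<and> Jst D S = b \<and> Psi D S = c" "phi_st T"]
      unfolding Cijs_def mem_Collect_eq by simp_all
    then show "T \<in> estates (mirror D) \<and> Ist (mirror D) T = - a \<and> Jst (mirror D) T = - b \<and> Psi (mirror D) T = - c"
      using Te Ist_phi[of D "phi_st T"] Jst_phi[of D "phi_st T"] Psi_phi[of D "phi_st T"]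
      by (simp add: mirror_mirror)
  qed
  have dC: "dtilde D x \<in> Cijs D (i + 2) j s"
    unfolding Cijs_def
  proof (intro CollectI allI impI)
    fix S' assume nz: "dtilde D x S' \<noteq> 0"
    have S'e: "S' \<in> estates D"
    proof (rule ccontr)
      assume "S' \<notin> estates D"
      then have "dtilde D x S' = 0" unfolding dtilde_def by simp
      with nz show False by simp
    qed
    have "(\<Sum>S\<in>estates D. x S * (\<Sum>v<ncr D. (-1) ^ tneg D S v * inc D S' S v)) \<noteq> 0"
      using nz S'e unfolding dtilde_def by simp
    then obtain S where Se: "S \<in> estates D" and
      t: "x S * (\<Sum>v<ncr D. (-1) ^ tneg D S v * inc D S' S v) \<noteq> 0"
      by (rule sum.not_neutral_contains_not_neutral)
    from t have xS: "x S \<noteq> 0" by simp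
    from t have "(\<Sum>v<ncr D. (-1) ^ tneg D S v * inc D S' S v) \<noteq> 0" by simp
    then obtain v where v1: "v \<in> {..<ncr D}" and v2: "(-1) ^ tneg D S v * inc D S' S v \<noteq> 0"
      by (rule sum.not_neutral_contains_not_neutral)
    have v: "v < ncr D" "inc D S' S v \<noteq> 0" using v1 v2 by auto
    have props: "Ist D S = i" "Jst D S = j" "Psi D S = s"
      using assms(2) xS spec[of "\<lambda>S. x S \<noteq> 0 \<longrightarrow> S \<in> estates D \<and> Ist D S = i \<and> Jst D S = j \<and> Psi D S = s" S]
      unfolding Cijs_def mem_Collect_eq by simp_all
    from v have c: "fst S' v = 1" "fst S v = -1" "\<forall>u<ncr D. u \<noteq> v \<longrightarrow> fst S' u = fst S u"
       "Jst D S' = Jst D S" "Psi D S' = Psi D S"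
      by (auto simp: inc_def split: if_splits)
    have "Ist D S' = Ist D S + 2"
    proof -
      have A: "{..<ncr D} = insert v ({..<ncr D} - {v})" using v by auto
      have "Ist D S' = fst S' v + (\<Sum>u\<in>{..<ncr D} - {v}. fst S' u)"
        unfolding Ist_def by (rule sum.remove) (use v in auto)
      also have "(\<Sum>u\<in>{..<ncr D} - {v}. fst S' u) = (\<Sum>u\<in>{..<ncr D} - {v}. fst S u)"
        using c(3) by (intro sum.cong) auto
      also have "Ist D S = fst S v + (\<Sum>u\<in>{..<ncr D} - {v}. fst S u)"
        unfolding Ist_def by (rule sum.remove) (use v in auto)
      ultimately show ?thesis using c by simp
    qed
    then show "S' \<in> estates D \<and> Ist D S' = i + 2 \<and> Jst D S' = j \<and> Psi D S' = s"
      using S'e props c by simp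
  qed
  have eq: "phi D (dtilde D x) = dplus (mirror D) (phi D x)"
  proof (rule ext)
    fix T'
    show "phi D (dtilde D x) T' = dplus (mirror D) (phi D x) T'"
    proof (cases "T' \<in> estates (mirror D)")
      case False then show ?thesis by (simp add: phi_eval dplus_def)
    next
      case True
      have inj: "inj_on phi_st (estates D)" by (metis inj_onI phi_st_invol)
      have img: "phi_st ` estates D = estates (mirror D)"
      proof
        show "phi_st ` estates D \<subseteq> estates (mirror D)" using phi_st_estates by blast
        show "estates (mirror D) \<subseteq> phi_st ` estates D"
        proof
          fix T assume "T \<in> estates (mirror D)"
          then have "phi_st T \<in> estates D" by (rule phi_st_estates2)
          then have "phi_st (phi_st T) \<in> phi_st ` estates D" by (rule imageI)
          then show "T \<in> phi_st ` estates D" by simp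
        qed
      qed
      have "dplus (mirror D) (phi D x) T' =
        (\<Sum>T\<in>phi_st ` estates D. phi D x T * (\<Sum>w<ncr D. (-1) ^ tpos (mirror D) T w * inc (mirror D) T T' w))"
        using True img by (simp add: dplus_def)
      also have "\<dots> = (\<Sum>S\<in>estates D. x S * (\<Sum>w<ncr D. (-1) ^ tneg D S w * inc D (phi_st T') S w))"
        unfolding sum.reindex[OF inj] comp_def
      proof (rule sum.cong)
        fix S assume "S \<in> estates D"
        then have "phi_st S \<in> estates (mirror D)" by (rule phi_st_estates)
        then have "phi D x (phi_st S) = x S" by (simp add: phi_eval)
        moreover have "\<And>w. inc (mirror D) (phi_st S) T' w = inc D (phi_st T') S w"
          using inc_phi[of D S "phi_st T'"] by simp
        ultimately show "phi D x (phi_st S) * (\<Sum>w<ncr D. (-1) ^ tpos (mirror D) (phi_st S) w * inc (mirror D) (phi_st S) T' w)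
          = x S * (\<Sum>w<ncr D. (-1) ^ tneg D S w * inc D (phi_st T') S w)"
          by (simp only: tpos_phi)
      qed simp
      also have "\<dots> = dtilde D x (phi_st T')"
        using phi_st_estates2[OF True] unfolding dtilde_def by (simp only: if_True)
      also have "\<dots> = phi D (dtilde D x) T'"
        using True by (simp only: phi_eval if_True)
      finally show ?thesis by (rule sym)
    qed
  qed
  have e: "- (i + 2) = - i - 2" by simp
  have p3: "phi D (dtilde D x) \<in> Cijs (mirror D) (- i - 2) (- j) (- s)"
    using phiC[OF dC] unfolding e .
  show ?thesis using phiC[OF assms(2)] dC p3 eq by blast
qed

end
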